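(* Let $q\in(0,1)$. For all $\nu\in\mathfrak h^*$, we have $\varphi^\nu_1(q^{2\rho})=0$ if and only if there exists $\alpha\in\Delta_+$ such that $(\nu,\alpha^\vee)\in 2\pi i\log(q_\alpha)^{-1}\mathbb{Z}\setminus\{0\}$.
   Context: $K$ is a connected simply connected compact simple Lie group with complexification $G=KAN$, $\mathfrak h$ a Cartan subalgebra, $\Delta_+$ positive roots, $W$ the Weyl group with length $l$, $\rho=\frac12\sum_{\alpha\in\Delta_+}\alpha$, $(\cdot,\cdot)$ normalized by $(\alpha,\alpha)=2$ for short roots, $\alpha^\vee=2\alpha/(\alpha,\alpha)$, $q_\alpha=q^{(\alpha,\alpha)/2}$. For $\mu\in\mathfrak h^*_{\mathbb{R}}$, $q^\mu\in A$. With $A_\nu(q^\mu)=\sum_{w\in W}(-1)^{l(w)}q^{(\mu,w\nu)}$ and $\chi_\nu(q^\mu)=A_{\nu+\rho}(q^\mu)/A_\rho(q^\mu)$, $\chi_\nu(1)=\prod_{\alpha\in\Delta_+}(\nu+\rho,\alpha)/\prod_{\alpha\in\Delta_+}(\rho,\alpha)$, define $\varphi^\nu_1(q^{\mu})=\chi_{\frac12\nu-\rho}(q^\mu)/\chi_{\frac12\nu-\rho}(1)$, understood as an analytic function of $\nu$ (extended analytically where the formula gives $0/0$). *)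

theory Defs
  imports "HOL-Analysis.Analysis"
begin

text \<open>Model: the real dual Cartan space is the set of real-coordinate vectors inside
  complex^'n (the complex dual Cartan space), with the complex-bilinear extension
  of the (suitably normalised) standard inner product.\<close>

definition bf :: "complex^'n \<Rightarrow> complex^'n \<Rightarrow> complex" where
  "bf x y = (\<Sum>i\<in>UNIV. x$i * y$i)"

definition csm :: "complex \<Rightarrow> complex^'n \<Rightarrow> complex^'n" where
  "csm c v = (\<chi> i. c * v$i)"

definition realv :: "complex^'n \<Rightarrow> bool" where
  "realv v \<longleftrightarrow> (\<forall>i. v$i \<in> \<real>)"

definition coroot :: "complex^'n \<Rightarrow> complex^'n" where
  "coroot \<alpha> = csm (2 / bf \<alpha> \<alpha>) \<alpha>"

definition refl :: "complex^'n \<Rightarrow> complex^'n \<Rightarrow> complex^'n" where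
  "refl \<alpha> v = v - csm (bf v (coroot \<alpha>)) \<alpha>"

text \<open>Reduced irreducible (crystallographic) root system spanning the real space,
  normalised so that short roots have (alpha,alpha) = 2.\<close>
definition simple_root_system :: "(complex^'n) set \<Rightarrow> bool" where
  "simple_root_system R \<longleftrightarrow>
     finite R \<and> 0 \<notin> R \<and> (\<forall>\<alpha>\<in>R. realv \<alpha>) \<and>
     (\<forall>v. realv v \<longrightarrow> (\<exists>c::complex^'n \<Rightarrow> real. v = (\<Sum>\<alpha>\<in>R. csm (of_real (c \<alpha>)) \<alpha>))) \<and>
     (\<forall>\<alpha>\<in>R. \<forall>\<beta>\<in>R. refl \<alpha> \<beta> \<in> R) \<and>
     (\<forall>\<alpha>\<in>R. \<forall>\<beta>\<in>R. bf \<beta> (coroot \<alpha>) \<in> \<int>) \<and>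
     (\<forall>\<alpha>\<in>R. \<forall>c::real. csm (of_real c) \<alpha> \<in> R \<longrightarrow> c = 1 \<or> c = -1) \<and>
     \<not> (\<exists>A B. A \<union> B = R \<and> A \<noteq> {} \<and> B \<noteq> {} \<and> A \<inter> B = {} \<and>
            (\<forall>\<alpha>\<in>A. \<forall>\<beta>\<in>B. bf \<alpha> \<beta> = 0)) \<and>
     (\<forall>\<alpha>\<in>R. Re (bf \<alpha> \<alpha>) \<ge> 2) \<and> (\<exists>\<alpha>\<in>R. bf \<alpha> \<alpha> = 2)"

definition regular :: "(complex^'n) set \<Rightarrow> complex^'n \<Rightarrow> bool" where
  "regular R \<gamma> \<longleftrightarrow> realv \<gamma> \<and> (\<forall>\<alpha>\<in>R. bf \<alpha> \<gamma> \<noteq> 0)"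

definition pos_roots :: "(complex^'n) set \<Rightarrow> complex^'n \<Rightarrow> (complex^'n) set" where
  "pos_roots R \<gamma> = {\<alpha>\<in>R. Re (bf \<alpha> \<gamma>) > 0}"

definition simple_roots :: "(complex^'n) set \<Rightarrow> complex^'n \<Rightarrow> (complex^'n) set" where
  "simple_roots R \<gamma> = {\<alpha>\<in>pos_roots R \<gamma>.
     \<not> (\<exists>\<beta>\<in>pos_roots R \<gamma>. \<exists>\<delta>\<in>pos_roots R \<gamma>. \<alpha> = \<beta> + \<delta>)}"

definition rho :: "(complex^'n) set \<Rightarrow> complex^'n \<Rightarrow> complex^'n" where
  "rho R \<gamma> = csm (1/2) (\<Sum>\<alpha>\<in>pos_roots R \<gamma>. \<alpha>)"

inductive_set weyl :: "(complex^'n) set \<Rightarrow> (complex^'n \<Rightarrow> complex^'n) set"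
  for R where
  weyl_id: "id \<in> weyl R"
| weyl_step: "w \<in> weyl R \<Longrightarrow> \<alpha> \<in> R \<Longrightarrow> refl \<alpha> \<circ> w \<in> weyl R"

definition word_map :: "(complex^'n) list \<Rightarrow> (complex^'n \<Rightarrow> complex^'n)" where
  "word_map as = foldr (\<lambda>\<alpha> f. refl \<alpha> \<circ> f) as id"

definition wlen :: "(complex^'n) set \<Rightarrow> complex^'n \<Rightarrow> (complex^'n \<Rightarrow> complex^'n) \<Rightarrow> nat" where
  "wlen R \<gamma> w = (LEAST k. \<exists>as. length as = k \<and> set as \<subseteq> simple_roots R \<gamma> \<and> w = word_map as)"

definition qpow :: "real \<Rightarrow> complex \<Rightarrow> complex" where
  "qpow q z = exp (z * of_real (ln q))"

definition Aalt :: "(complex^'n) set \<Rightarrow> complex^'n \<Rightarrow> real \<Rightarrow> complex^'n \<Rightarrow> complex^'n \<Rightarrow> complex" where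
  "Aalt R \<gamma> q \<nu> \<mu> = (\<Sum>w\<in>weyl R. (-1) ^ wlen R \<gamma> w * qpow q (bf \<mu> (w \<nu>)))"

definition chi :: "(complex^'n) set \<Rightarrow> complex^'n \<Rightarrow> real \<Rightarrow> complex^'n \<Rightarrow> complex^'n \<Rightarrow> complex" where
  "chi R \<gamma> q \<nu> \<mu> = Aalt R \<gamma> q (\<nu> + rho R \<gamma>) \<mu> / Aalt R \<gamma> q (rho R \<gamma>) \<mu>"

text \<open>chi_nu(1), given by the Weyl dimension formula.\<close>
definition chi1 :: "(complex^'n) set \<Rightarrow> complex^'n \<Rightarrow> complex^'n \<Rightarrow> complex" where
  "chi1 R \<gamma> \<nu> = (\<Prod>\<alpha>\<in>pos_roots R \<gamma>. bf (\<nu> + rho R \<gamma>) \<alpha>) / (\<Prod>\<alpha>\<in>pos_roots R \<gamma>. bf (rho R \<gamma>) \<alpha>)"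

text \<open>The naive formula for phi^nu_1(q^mu), as a function of nu.\<close>
definition phi_raw :: "(complex^'n) set \<Rightarrow> complex^'n \<Rightarrow> real \<Rightarrow> complex^'n \<Rightarrow> complex^'n \<Rightarrow> complex" where
  "phi_raw R \<gamma> q \<nu> \<mu> =
     chi R \<gamma> q (csm (1/2) \<nu> - rho R \<gamma>) \<mu> / chi1 R \<gamma> (csm (1/2) \<nu> - rho R \<gamma>)"

text \<open>phi^nu_1(q^mu): the (analytic, hence continuous) extension in nu of the naive
  formula from the dense open set where chi_{nu/2-rho}(1) is nonzero.\<close>
definition phi1 :: "(complex^'n) set \<Rightarrow> complex^'n \<Rightarrow> real \<Rightarrow> complex^'n \<Rightarrow> complex^'n \<Rightarrow> complex" where
  "phi1 R \<gamma> q \<nu> \<mu> =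
     Lim (at \<nu> within {\<nu>'. chi1 R \<gamma> (csm (1/2) \<nu>' - rho R \<gamma>) \<noteq> 0})
         (\<lambda>\<nu>'. phi_raw R \<gamma> q \<nu>' \<mu>)"

end

theory Submission
  imports Defs
begin


lemma csm_nth[simp]: "csm c v $ i = c * v $ i" by (simp add: csm_def)

lemma bf_sym: "bf x y = bf y x" unfolding bf_def by (simp add: mult.commute)
lemma bf_add_left[simp]: "bf (x + y) z = bf x z + bf y z" unfolding bf_def by (simp add: distrib_right sum.distrib)
lemma bf_add_right[simp]: "bf z (x + y) = bf z x + bf z y" unfolding bf_def by (simp add: distrib_left sum.distrib)
lemma bf_diff_left[simp]: "bf (x - y) z = bf x z - bf y z" unfolding bf_def by (simp add: left_diff_distrib sum_subtractf)
lemma bf_diff_right[simp]: "bf z (x - y) = bf z x - bf z y" unfolding bf_def by (simp add: right_diff_distrib sum_subtractf)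
lemma bf_minus_left[simp]: "bf (- x) z = - bf x z" unfolding bf_def by (simp add: sum_negf)
lemma bf_minus_right[simp]: "bf z (- x) = - bf z x" unfolding bf_def by (simp add: sum_negf)
lemma bf_csm_left[simp]: "bf (csm c x) z = c * bf x z" unfolding bf_def by (simp add: sum_distrib_left mult.assoc)
lemma bf_csm_right[simp]: "bf z (csm c x) = c * bf z x" unfolding bf_def by (simp add: sum_distrib_left algebra_simps)
lemma bf_zero_left[simp]: "bf 0 z = 0" unfolding bf_def by simp
lemma bf_zero_right[simp]: "bf z 0 = 0" unfolding bf_def by simp
lemma bf_sum_left: "bf (\<Sum>a\<in>A. f a) z = (\<Sum>a\<in>A. bf (f a) z)"
  by (induction A rule: infinite_finite_induct) auto
lemma bf_sum_right: "bf z (\<Sum>a\<in>A. f a) = (\<Sum>a\<in>A. bf z (f a))"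
  by (induction A rule: infinite_finite_induct) auto

lemma csm_add[simp]: "csm c (x + y) = csm c x + csm c y" by (simp add: vec_eq_iff algebra_simps)
lemma csm_diff[simp]: "csm c (x - y) = csm c x - csm c y" by (simp add: vec_eq_iff algebra_simps)
lemma csm_minus[simp]: "csm c (- x) = - csm c x" by (simp add: vec_eq_iff algebra_simps)
lemma csm_add_left: "csm (a + b) x = csm a x + csm b x" by (simp add: vec_eq_iff algebra_simps)
lemma csm_diff_left: "csm (a - b) x = csm a x - csm b x" by (simp add: vec_eq_iff algebra_simps)
lemma csm_csm[simp]: "csm a (csm b x) = csm (a*b) x" by (simp add: vec_eq_iff algebra_simps)
lemma csm_one[simp]: "csm 1 x = x" by (simp add: vec_eq_iff)
lemma csm_zero[simp]: "csm 0 x = 0" by (simp add: vec_eq_iff)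
lemma csm_zero_right[simp]: "csm c 0 = 0" by (simp add: vec_eq_iff)
lemma csm_neg1[simp]: "csm (-1) x = - x" by (simp add: vec_eq_iff)
lemma csm_sum: "csm c (\<Sum>a\<in>A. f a) = (\<Sum>a\<in>A. csm c (f a))"
  by (induction A rule: infinite_finite_induct) auto
lemma csm_eq_self: "x \<noteq> 0 \<Longrightarrow> csm c x = x \<Longrightarrow> c = 1"
  by (auto simp: vec_eq_iff)
lemma csm_two: "csm 2 x = x + x" by (simp add: vec_eq_iff algebra_simps)

lemma realv_add[intro]: "realv x \<Longrightarrow> realv y \<Longrightarrow> realv (x + y)" unfolding realv_def by auto
lemma realv_diff[intro]: "realv x \<Longrightarrow> realv y \<Longrightarrow> realv (x - y)" unfolding realv_def by auto
lemma realv_minus[intro]: "realv x \<Longrightarrow> realv (- x)" unfolding realv_def by auto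
lemma realv_zero[intro]: "realv 0" unfolding realv_def by auto
lemma realv_csm[intro]: "c \<in> \<real> \<Longrightarrow> realv x \<Longrightarrow> realv (csm c x)" unfolding realv_def by auto
lemma realv_sum[intro]: "(\<And>a. a \<in> A \<Longrightarrow> realv (f a)) \<Longrightarrow> realv (\<Sum>a\<in>A. f a)"
  by (induction A rule: infinite_finite_induct) auto
lemma bf_real: "realv x \<Longrightarrow> realv y \<Longrightarrow> bf x y \<in> \<real>"
  unfolding realv_def bf_def by (auto intro!: sum_in_Reals)
lemma bf_real_eq: "realv x \<Longrightarrow> realv y \<Longrightarrow> bf x y = of_real (Re (bf x y))"
  using bf_real by (metis Reals_cases Re_complex_of_real)
lemma realv_Im: "realv x \<Longrightarrow> Im (x$i) = 0"
  unfolding realv_def by (simp add: complex_is_Real_iff)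
lemma bf_self_Re: "realv x \<Longrightarrow> Re (bf x x) = (\<Sum>i\<in>UNIV. (Re (x$i))^2)"
  unfolding bf_def by (simp add: realv_Im power2_eq_square)
lemma bf_self_nonneg: "realv x \<Longrightarrow> Re (bf x x) \<ge> 0"
  by (simp add: bf_self_Re sum_nonneg)
lemma bf_self_zero: "realv x \<Longrightarrow> Re (bf x x) \<le> 0 \<Longrightarrow> x = 0"
proof -
  assume r: "realv x" and le: "Re (bf x x) \<le> 0"
  have "(\<Sum>i\<in>UNIV. (Re (x$i))^2) = 0" using le bf_self_Re[OF r] bf_self_nonneg[OF r] by simp
  then have "\<forall>i\<in>UNIV. (Re (x$i))^2 = 0" by (subst (asm) sum_nonneg_eq_0_iff) auto
  then show "x = 0" using realv_Im[OF r] by (simp add: vec_eq_iff complex_eq_iff)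
qed




definition lin :: "(complex^'n \<Rightarrow> complex^'n) \<Rightarrow> bool" where
  "lin f \<longleftrightarrow> (\<forall>x y. f (x + y) = f x + f y) \<and> (\<forall>c x. f (csm c x) = csm c (f x))"

lemma lin_add: "lin f \<Longrightarrow> f (x + y) = f x + f y" unfolding lin_def by blast
lemma lin_csm: "lin f \<Longrightarrow> f (csm c x) = csm c (f x)" unfolding lin_def by blast
lemma lin_zero: "lin f \<Longrightarrow> f 0 = 0" using lin_csm[of f 0 0] by simp
lemma lin_minus: "lin f \<Longrightarrow> f (- x) = - f x" using lin_csm[of f "-1" x] by simp
lemma lin_diff: "lin f \<Longrightarrow> f (x - y) = f x - f y"
  using lin_add[of f x "-y"] lin_minus[of f y] by simp
lemma lin_sum: "lin f \<Longrightarrow> f (\<Sum>a\<in>A. g a) = (\<Sum>a\<in>A. f (g a))"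
  by (induction A rule: infinite_finite_induct) (auto simp: lin_zero lin_add)
lemma lin_comp: "lin f \<Longrightarrow> lin g \<Longrightarrow> lin (f \<circ> g)" unfolding lin_def by auto
lemma lin_id: "lin id" unfolding lin_def by auto

lemma bf_coroot: "bf x (coroot a) = 2 * bf x a / bf a a"
  unfolding coroot_def by simp

lemma refl_lin: "lin (refl a)"
  unfolding lin_def refl_def by (auto simp: algebra_simps csm_add_left csm_diff_left)

lemma refl_self: "bf a a \<noteq> 0 \<Longrightarrow> refl a a = - a"
  unfolding refl_def by (simp add: bf_coroot csm_two)

lemma refl_orth: "bf x a = 0 \<Longrightarrow> refl a x = x"
  unfolding refl_def by (simp add: bf_coroot)

lemma refl_bf: "bf a a \<noteq> 0 \<Longrightarrow> bf (refl a x) (refl a y) = bf x y"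
  unfolding refl_def by (simp add: bf_coroot bf_sym[of a x] bf_sym[of a y] field_simps)

lemma refl_refl: "bf a a \<noteq> 0 \<Longrightarrow> refl a (refl a x) = x"
  unfolding refl_def by (simp add: bf_coroot vec_eq_iff field_simps)

lemma refl_uminus: "refl (- a) = refl a"
  unfolding refl_def coroot_def by (auto simp: vec_eq_iff)

lemma refl_real: "realv a \<Longrightarrow> realv x \<Longrightarrow> realv (refl a x)"
proof -
  assume r: "realv a" "realv x"
  have "2 * bf x a / bf a a \<in> \<real>" using r by (intro Reals_divide Reals_mult) (auto intro: bf_real)
  then show ?thesis unfolding refl_def bf_coroot using r by (intro realv_diff realv_csm) auto
qed

lemma refl_conj:
  assumes "lin w" "\<And>x y. bf (w x) (w y) = bf x y" "\<And>x. w (v x) = x"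
  shows "refl (w b) x = w (refl b (v x))"
proof -
  have "w (refl b (v x)) = w (v x) - csm (bf (v x) (coroot b)) (w b)"
    unfolding refl_def using assms(1) by (simp add: lin_diff lin_csm)
  also have "bf (v x) (coroot b) = bf x (coroot (w b))"
    using assms(2)[of "v x" b] assms(2)[of b b] assms(3)[of x] by (simp add: bf_coroot)
  finally show ?thesis unfolding refl_def using assms(3) by simp
qed




locale rs =
  fixes R :: "(complex^'n::finite) set" and g :: "complex^'n"
  assumes srs: "simple_root_system R" and reg: "regular R g"
begin

abbreviation "P \<equiv> pos_roots R g"
abbreviation "S \<equiv> simple_roots R g"
abbreviation "W \<equiv> weyl R"
definition h :: "complex^'n \<Rightarrow> real" where "h a = Re (bf a g)"

lemmas srs' = srs[unfolded simple_root_system_def]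
lemma finR: "finite R" using srs' by (elim conjE) assumption
lemma zero_notin: "0 \<notin> R" using srs' by (elim conjE) assumption
lemma realR': "\<forall>a\<in>R. realv a" using srs' by (elim conjE) assumption
lemma realR: "a \<in> R \<Longrightarrow> realv a" using realR' by blast
lemma spanR': "\<forall>v. realv v \<longrightarrow> (\<exists>c::complex^'n \<Rightarrow> real. v = (\<Sum>a\<in>R. csm (of_real (c a)) a))"
  using srs' by (elim conjE) assumption
lemma spanR: "realv v \<Longrightarrow> \<exists>c::complex^'n \<Rightarrow> real. v = (\<Sum>a\<in>R. csm (of_real (c a)) a)"
  using spanR' by blast
lemma refl_closed': "\<forall>a\<in>R. \<forall>b\<in>R. refl a b \<in> R" using srs' by (elim conjE) assumption
lemma refl_closed: "a \<in> R \<Longrightarrow> b \<in> R \<Longrightarrow> refl a b \<in> R"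
  using refl_closed' by blast
lemma integral': "\<forall>a\<in>R. \<forall>b\<in>R. bf b (coroot a) \<in> \<int>" using srs' by (elim conjE) assumption
lemma integral: "a \<in> R \<Longrightarrow> b \<in> R \<Longrightarrow> bf b (coroot a) \<in> \<int>"
  using integral' by blast
lemma reduced': "\<forall>a\<in>R. \<forall>c::real. csm (of_real c) a \<in> R \<longrightarrow> c = 1 \<or> c = -1" using srs' by (elim conjE) assumption
lemma reduced: "a \<in> R \<Longrightarrow> csm (of_real c) a \<in> R \<Longrightarrow> c = 1 \<or> c = -1"
  using reduced' by blast
lemma norm_ge2': "\<forall>a\<in>R. Re (bf a a) \<ge> 2" using srs' by (elim conjE) assumption
lemma norm_ge2: "a \<in> R \<Longrightarrow> Re (bf a a) \<ge> 2"
  using norm_ge2' by blast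
lemma bfaa: "a \<in> R \<Longrightarrow> bf a a \<noteq> 0" using norm_ge2 by force
lemma realg: "realv g" using reg unfolding regular_def by blast
lemma bfg: "a \<in> R \<Longrightarrow> bf a g \<noteq> 0" using reg unfolding regular_def by blast

lemma negR: "a \<in> R \<Longrightarrow> - a \<in> R"
  using refl_closed[of a a] refl_self[OF bfaa] by simp

lemma h_add[simp]: "h (x + y) = h x + h y" unfolding h_def by simp
lemma h_minus[simp]: "h (- x) = - h x" unfolding h_def by simp
lemma h_diff[simp]: "h (x - y) = h x - h y" unfolding h_def by simp

lemma P_R: "a \<in> P \<Longrightarrow> a \<in> R" unfolding pos_roots_def by auto
lemma P_h: "a \<in> P \<Longrightarrow> h a > 0" unfolding pos_roots_def h_def by auto
lemma P_iff: "a \<in> P \<longleftrightarrow> a \<in> R \<and> h a > 0" unfolding pos_roots_def h_def by auto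
lemma finP: "finite P" using finR unfolding pos_roots_def by auto
lemma negP: "a \<in> P \<Longrightarrow> - a \<notin> P" using P_h[of a] P_h[of "-a"] by auto
lemma h_nonzero: "a \<in> R \<Longrightarrow> h a \<noteq> 0"
  using bfg[of a] bf_real_eq[OF realR realg, of a] unfolding h_def by force
lemma R_cases: "a \<in> R \<Longrightarrow> a \<notin> P \<Longrightarrow> - a \<in> P"
  using h_nonzero[of a] negR[of a] by (auto simp: P_iff)
lemma S_P: "a \<in> S \<Longrightarrow> a \<in> P" unfolding simple_roots_def by auto
lemma S_R: "a \<in> S \<Longrightarrow> a \<in> R" using S_P P_R by blast
lemma not_S: "a \<in> P \<Longrightarrow> a \<notin> S \<Longrightarrow> \<exists>b\<in>P. \<exists>d\<in>P. a = b + d"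
  unfolding simple_roots_def by auto
lemma S_not_sum: "a \<in> S \<Longrightarrow> b \<in> P \<Longrightarrow> d \<in> P \<Longrightarrow> a \<noteq> b + d"
  unfolding simple_roots_def by auto
lemma bf_R_real: "a \<in> R \<Longrightarrow> realv x \<Longrightarrow> bf a x = of_real (Re (bf a x))"
  using bf_real_eq realR by blast

lemma card_lower_less:
  assumes "b \<in> P" "h b < h a"
  shows "card {d\<in>P. h d < h b} < card {d\<in>P. h d < h a}"
  by (rule psubset_card_mono) (use assms finP in auto)

lemma pos_sum_simple: "a \<in> P \<Longrightarrow> \<exists>xs. set xs \<subseteq> S \<and> a = sum_list xs"
proof (induction "card {d\<in>P. h d < h a}" arbitrary: a rule: less_induct)
  case less
  show ?case
  proof (cases "a \<in> S")
    case True then show ?thesis by (intro exI[of _ "[a]"]) auto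
  next
    case False
    then obtain b d where bd: "b \<in> P" "d \<in> P" "a = b + d" using not_S less.prems by blast
    have "h b < h a" "h d < h a" using bd P_h[of b] P_h[of d] by auto
    then obtain xs ys where "set xs \<subseteq> S" "b = sum_list xs" "set ys \<subseteq> S" "d = sum_list ys"
      using less.hyps[OF card_lower_less] bd by metis
    then show ?thesis using bd by (intro exI[of _ "xs @ ys"]) auto
  qed
qed

lemma bf_sum_list: "bf (sum_list xs) y = sum_list (map (\<lambda>x. bf x y) xs)"
  by (induction xs) auto

lemma Re_sum_list_nonneg: "(\<And>x. x \<in> set xs \<Longrightarrow> Re (f x) \<ge> 0) \<Longrightarrow> Re (sum_list (map f xs)) \<ge> 0"
  by (induction xs) (auto intro: add_nonneg_nonneg)
lemma Re_sum_list_nonpos: "(\<And>x. x \<in> set xs \<Longrightarrow> Re (f x) \<le> 0) \<Longrightarrow> Re (sum_list (map f xs)) \<le> 0"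
  by (induction xs) (auto intro: add_nonpos_nonpos)
lemma Re_sum_list_pos: "xs \<noteq> [] \<Longrightarrow> (\<And>x. x \<in> set xs \<Longrightarrow> Re (f x) > 0) \<Longrightarrow> Re (sum_list (map f xs)) > 0"
proof (induction xs)
  case (Cons a xs) then show ?case
    by (cases "xs = []") (auto intro: add_pos_pos)
qed simp

lemma dominance:
  assumes "\<And>a. a \<in> S \<Longrightarrow> Re (bf a y) \<ge> 0" "b \<in> P"
  shows "Re (bf b y) \<ge> 0"
proof -
  obtain xs where "set xs \<subseteq> S" "b = sum_list xs" using pos_sum_simple assms(2) by blast
  then show ?thesis using assms(1) by (auto simp: bf_sum_list intro!: Re_sum_list_nonneg)
qed

lemma cs_eq:
  assumes "realv x" "realv y" "Re (bf y y) > 0" "(Re (bf x y))^2 \<ge> Re (bf x x) * Re (bf y y)"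
  shows "x = csm (of_real (Re (bf x y) / Re (bf y y))) y"
proof -
  define t where "t = Re (bf x y) / Re (bf y y)"
  define z where "z = x - csm (of_real t) y"
  have rz: "realv z" unfolding z_def using assms by (intro realv_diff realv_csm) auto
  have "bf z z = bf x x - 2 * of_real t * bf x y + (of_real t)^2 * bf y y"
    unfolding z_def by (simp add: bf_sym[of y x] algebra_simps power2_eq_square)
  then have "Re (bf z z) = Re (bf x x) - 2 * t * Re (bf x y) + t^2 * Re (bf y y)"
    by (simp add: power2_eq_square)
  also have "\<dots> = Re (bf x x) - (Re (bf x y))^2 / Re (bf y y)"
    unfolding t_def using assms(3) by (simp add: field_simps power2_eq_square)
  also have "\<dots> \<le> 0" using assms(3,4) by (simp add: field_simps)
  finally have "z = 0" using bf_self_zero[OF rz] by simp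
  then show ?thesis unfolding z_def t_def by simp
qed

lemma Re_bf_aa_pos: "a \<in> R \<Longrightarrow> Re (bf a a) > 0" using norm_ge2[of a] by simp

lemma int_Re: "z \<in> \<int> \<Longrightarrow> \<exists>k::int. z = of_int k" by (auto elim: Ints_cases)

lemma simple_obtuse:
  assumes a: "a \<in> S" and b: "b \<in> S" and ne: "a \<noteq> b"
  shows "Re (bf a b) \<le> 0"
proof (rule ccontr)
  assume "\<not> ?thesis"
  then have pos: "Re (bf a b) > 0" by simp
  have aR: "a \<in> R" and bR: "b \<in> R" using a b S_R by auto
  define A where "A = Re (bf a a)"
  define B where "B = Re (bf b b)"
  define c where "c = Re (bf a b)"
  have A: "A \<ge> 2" "B \<ge> 2" unfolding A_def B_def using norm_ge2 aR bR by auto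
  have ra: "realv a" and rb: "realv b" using aR bR realR by auto
  have eqs: "bf a a = of_real A" "bf b b = of_real B" "bf a b = of_real c" "bf b a = of_real c"
    unfolding A_def B_def c_def using bf_R_real[OF aR ra] bf_R_real[OF bR rb] bf_R_real[OF aR rb] bf_sym[of b a] by auto
  have "a - b \<in> R"
  proof (cases "c^2 \<ge> A * B")
    case True
    then have "a = csm (of_real (c / B)) b" using cs_eq[OF ra rb] Re_bf_aa_pos[OF bR]
      unfolding A_def B_def c_def by blast
    then have "c / B = 1 \<or> c / B = -1" using reduced[OF bR] aR by metis
    then show ?thesis
    proof
      assume "c / B = 1" then show ?thesis using ne \<open>a = _\<close> by simp
    next
      assume "c / B = -1"
      then have "a = - b" using \<open>a = _\<close> by simp
      then show ?thesis using negP[of b] S_P a b by auto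
    qed
  next
    case False
    have m1: "bf a (coroot b) = of_real (2 * c / B)" and m2: "bf b (coroot a) = of_real (2 * c / A)"
      by (simp_all add: bf_coroot eqs)
    obtain k1 where k1: "bf a (coroot b) = of_int k1" using int_Re[OF integral[OF bR aR]] by blast
    obtain k2 where k2: "bf b (coroot a) = of_int k2" using int_Re[OF integral[OF aR bR]] by blast
    have k: "2 * c / B = k1" "2 * c / A = k2" using m1 m2 k1 k2 by (metis of_real_eq_iff of_real_of_int_eq)+
    have "c > 0" using pos c_def by simp
    then have "real_of_int k1 > 0" "real_of_int k2 > 0" using k A by (metis divide_pos_pos mult_pos_pos zero_less_numeral order_less_le_trans)+
    then have "k1 > 0" "k2 > 0" by simp_all
    moreover have "real_of_int (k1 * k2) < 4"
    proof -
      have "real_of_int (k1 * k2) = (2 * c / B) * (2 * c / A)" using k by simp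
      also have "\<dots> = 4 * c^2 / (A * B)" by (simp add: field_simps power2_eq_square)
      also have "\<dots> < 4" using False A by (simp add: field_simps)
      finally show ?thesis .
    qed
    ultimately have "k1 = 1 \<or> k2 = 1"
    proof -
      assume k0: "k1 > 0" "k2 > 0" and "real_of_int (k1 * k2) < 4"
      then have lt: "k1 * k2 < 4" by linarith
      show ?thesis
      proof (rule ccontr)
        assume "\<not> ?thesis"
        then have "k1 \<ge> 2" "k2 \<ge> 2" using k0 by auto
        then have "k1 * k2 \<ge> 2 * 2" by (intro mult_mono) auto
        then show False using lt by simp
      qed
    qed
    then show ?thesis
    proof
      assume "k1 = 1"
      then have "refl b a = a - b" unfolding refl_def using m1 k by simp
      then show ?thesis using refl_closed[OF bR aR] by simp
    next
      assume "k2 = 1"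
      then have "refl a b = b - a" unfolding refl_def using m2 k by simp
      then show ?thesis using negR[OF refl_closed[OF aR bR]] by simp
    qed
  qed
  then show False
  proof (cases "a - b \<in> P")
    case True then show False using S_not_sum[OF a S_P[OF b] True] by simp
  next
    case False
    then have "b - a \<in> P" using R_cases[OF \<open>a - b \<in> R\<close>] by simp
    then show False using S_not_sum[OF b S_P[OF a] \<open>b - a \<in> P\<close>] by simp
  qed
qed

end



context rs begin

lemma sum_list_filter:
  "sum_list xs = sum_list (filter (\<lambda>x. x \<noteq> a) xs) + csm (of_nat (length (filter (\<lambda>x. x = a) xs))) a"
  by (induction xs) (auto simp: csm_add_left algebra_simps)

lemma simple_refl_pos:
  assumes a: "a \<in> S" and b: "b \<in> P" and ne: "b \<noteq> a"
  shows "refl a b \<in> P"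
proof (rule ccontr)
  assume nP: "refl a b \<notin> P"
  have aR: "a \<in> R" and bR: "b \<in> R" using a b S_R P_R by auto
  obtain k :: int where k: "bf b (coroot a) = of_int k" using int_Re[OF integral[OF aR bR]] by blast
  have "refl a b \<in> R" using refl_closed[OF aR bR] .
  then have "- refl a b \<in> P" using R_cases nP by blast
  then have dP: "csm (of_int k) a - b \<in> P" unfolding refl_def k by simp
  obtain xs where xs: "set xs \<subseteq> S" "b = sum_list xs" using pos_sum_simple b by blast
  obtain ys where ys: "set ys \<subseteq> S" "csm (of_int k) a - b = sum_list ys" using pos_sum_simple dP by blast
  define zs where "zs = filter (\<lambda>x. x \<noteq> a) (xs @ ys)"
  define m where "m = length (filter (\<lambda>x. x = a) (xs @ ys))"
  have "sum_list (xs @ ys) = b + (csm (of_int k) a - b)" using xs ys by simp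
  then have "sum_list (xs @ ys) = csm (of_int k) a" by simp
  then have "sum_list zs + csm (of_nat m) a = csm (of_int k) a"
    using sum_list_filter[of "xs @ ys" a] unfolding zs_def m_def by simp
  then have zsum: "sum_list zs = csm (of_int (k - int m)) a"
    by (simp add: csm_diff_left[symmetric] eq_diff_eq[symmetric])
  show False
  proof (cases "zs = []")
    case True
    then have "filter (\<lambda>x. x \<noteq> a) xs = []" unfolding zs_def by simp
    then have "b = csm (of_nat (length (filter (\<lambda>x. x = a) xs))) a"
      using sum_list_filter[of xs a] xs by simp
    then have bcsm: "b = csm (of_real (real (length (filter (\<lambda>x. x = a) xs)))) a" by simp
    then have "real (length (filter (\<lambda>x. x = a) xs)) = 1 \<or> real (length (filter (\<lambda>x. x = a) xs)) = -1"
      using reduced[OF aR] bR by metis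
    then have "b = a" using bcsm by auto
    then show False using ne by simp
  next
    case False
    have zsS: "set zs \<subseteq> S - {a}" using xs ys unfolding zs_def by auto
    have "h (sum_list zs) > 0"
      unfolding h_def bf_sum_list using False zsS by (intro Re_sum_list_pos) (auto dest!: S_P P_h simp: h_def)
    then have "of_int (k - int m) * h a > 0" using zsum unfolding h_def by simp
    then have e1: "k - int m > 0" using P_h[OF S_P[OF a]] by (simp add: zero_less_mult_iff)
    have "Re (bf (sum_list zs) a) \<le> 0"
      unfolding bf_sum_list using zsS by (intro Re_sum_list_nonpos) (auto intro: simple_obtuse[OF _ a])
    then have "of_int (k - int m) * Re (bf a a) \<le> 0" using zsum by simp
    then show False using e1 norm_ge2[OF aR] by (simp add: mult_le_0_iff)
  qed
qed

lemma W_lin: "w \<in> W \<Longrightarrow> lin w"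
proof (induction rule: weyl.induct)
  case weyl_id then show ?case by (rule lin_id)
next
  case (weyl_step w a) show ?case by (rule lin_comp[OF refl_lin weyl_step.IH])
qed
lemma W_orth: "w \<in> W \<Longrightarrow> bf (w x) (w y) = bf x y"
  by (induction arbitrary: x y rule: weyl.induct) (auto simp: refl_bf bfaa)
lemma W_R: "w \<in> W \<Longrightarrow> a \<in> R \<Longrightarrow> w a \<in> R"
  by (induction rule: weyl.induct) (auto intro: refl_closed)
lemma W_real: "w \<in> W \<Longrightarrow> realv x \<Longrightarrow> realv (w x)"
  by (induction rule: weyl.induct) (auto intro: refl_real realR)
lemma refl_W: "a \<in> R \<Longrightarrow> refl a \<in> W"
  using weyl_step[OF weyl_id, of a R] by simp
lemma W_comp: assumes "u \<in> W" "v \<in> W" shows "u \<circ> v \<in> W"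
  using assms(1)
proof (induction rule: weyl.induct)
  case weyl_id then show ?case using assms(2) by simp
next
  case (weyl_step w a)
  have "refl a \<circ> (w \<circ> v) \<in> W" using weyl_step.IH weyl_step.hyps(2) by (rule weyl.weyl_step)
  then show ?case by (simp only: comp_assoc)
qed
lemma W_inv: "w \<in> W \<Longrightarrow> \<exists>v\<in>W. (\<forall>x. v (w x) = x) \<and> (\<forall>x. w (v x) = x)"
proof (induction rule: weyl.induct)
  case weyl_id then show ?case by (intro bexI[of _ id]) (auto intro: weyl.weyl_id)
next
  case (weyl_step w a)
  then obtain v where v: "v \<in> W" "\<forall>x. v (w x) = x" "\<forall>x. w (v x) = x" by blast
  show ?case
    by (intro bexI[of _ "v \<circ> refl a"]) (auto simp: v refl_refl bfaa weyl_step W_comp refl_W)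
qed
lemma W_inj: "w \<in> W \<Longrightarrow> w x = w y \<Longrightarrow> x = y"
  using W_inv by metis
lemma W_surjR: "w \<in> W \<Longrightarrow> a \<in> R \<Longrightarrow> \<exists>b\<in>R. a = w b"
proof -
  assume w: "w \<in> W" and a: "a \<in> R"
  obtain v where v: "v \<in> W" "\<forall>x. w (v x) = x" using W_inv[OF w] by blast
  then show ?thesis using a W_R[OF v(1) a] by metis
qed

lemma cspan: "\<exists>c::complex^'n \<Rightarrow> complex. x = (\<Sum>a\<in>R. csm (c a) a)"
proof -
  define xr :: "complex^'n" where "xr = (\<chi> i. of_real (Re (x$i)))"
  define xi :: "complex^'n" where "xi = (\<chi> i. of_real (Im (x$i)))"
  have "realv xr" "realv xi" unfolding xr_def xi_def realv_def by auto
  then obtain cr ci where cr: "xr = (\<Sum>a\<in>R. csm (of_real (cr a)) a)" and ci: "xi = (\<Sum>a\<in>R. csm (of_real (ci a)) a)"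
    using spanR by metis
  have "x = xr + csm \<i> xi" unfolding xr_def xi_def by (simp add: vec_eq_iff complex_eq_iff)
  also have "\<dots> = (\<Sum>a\<in>R. csm (of_real (cr a) + \<i> * of_real (ci a)) a)"
    unfolding cr ci by (simp add: csm_sum csm_add_left sum.distrib)
  finally have "x = (\<Sum>a\<in>R. csm (of_real (cr a) + \<i> * of_real (ci a)) a)" .
  then show ?thesis by (intro exI[where x="\<lambda>a. of_real (cr a) + \<i> * of_real (ci a)"])
qed

lemma W_ext: "u \<in> W \<Longrightarrow> v \<in> W \<Longrightarrow> (\<And>a. a \<in> R \<Longrightarrow> u a = v a) \<Longrightarrow> u = v"
proof (rule ext)
  fix x assume u: "u \<in> W" and v: "v \<in> W" and eq: "\<And>a. a \<in> R \<Longrightarrow> u a = v a"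
  obtain c where c: "x = (\<Sum>a\<in>R. csm (c a) a)" using cspan by blast
  show "u x = v x" unfolding c using W_lin[OF u] W_lin[OF v] eq by (simp add: lin_sum lin_csm)
qed

lemma finW: "finite W"
proof (rule inj_on_finite[of "\<lambda>w. restrict w R" W "R \<rightarrow>\<^sub>E R"])
  show "inj_on (\<lambda>w. restrict w R) W"
    by (rule inj_onI) (metis W_ext restrict_apply')
  show "(\<lambda>w. restrict w R) ` W \<subseteq> R \<rightarrow>\<^sub>E R" using W_R by auto
  show "finite (R \<rightarrow>\<^sub>E R)" using finR by (intro finite_PiE) auto
qed

definition tau :: "(complex^'n \<Rightarrow> complex^'n) \<Rightarrow> complex^'n \<Rightarrow> complex^'n" where
  "tau w a = (if w a \<in> P then w a else - w a)"

lemma tau_P: "w \<in> W \<Longrightarrow> a \<in> P \<Longrightarrow> tau w a \<in> P"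
  unfolding tau_def using R_cases W_R P_R by auto

lemma tau_inj: assumes w: "w \<in> W" shows "inj_on (tau w) P"
proof (rule inj_onI)
  fix a b assume a: "a \<in> P" and b: "b \<in> P" and e: "tau w a = tau w b"
  have m: "w (- x) = - w x" for x using lin_minus[OF W_lin[OF w]] .
  have "w a = w b \<or> w a = - w b" using e unfolding tau_def
    by (cases "w a \<in> P"; cases "w b \<in> P") (auto simp add: minus_equation_iff[of "w a"])
  then show "a = b"
  proof
    assume "w a = w b" then show ?thesis using W_inj[OF w] by blast
  next
    assume "w a = - w b" then have "w a = w (- b)" using m by simp
    then have "a = - b" using W_inj[OF w] by blast
    then show ?thesis using negP a b by blast
  qed
qed

lemma tau_bij: "w \<in> W \<Longrightarrow> bij_betw (tau w) P P"
  unfolding bij_betw_def using tau_inj endo_inj_surj[OF finP] tau_P by blast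

definition sg :: "(complex^'n \<Rightarrow> complex^'n) \<Rightarrow> complex" where
  "sg w = (-1) ^ card {a\<in>P. w a \<notin> P}"

lemma prod_sign:
  assumes w: "w \<in> W" and odd: "\<And>x. F (- x) = - F x"
  shows "(\<Prod>a\<in>P. F (w a)) = sg w * (\<Prod>a\<in>P. F a)"
proof -
  have "(\<Prod>a\<in>P. F (w a)) = (\<Prod>a\<in>P. (if w a \<in> P then 1 else -1) * F (tau w a))"
    by (rule prod.cong) (auto simp: tau_def odd)
  also have "\<dots> = (\<Prod>a\<in>P. (if w a \<in> P then 1 else -1)) * (\<Prod>a\<in>P. F (tau w a))"
    by (rule prod.distrib)
  also have "(\<Prod>a\<in>P. F (tau w a)) = (\<Prod>a\<in>P. F a)"
    using prod.reindex_bij_betw[OF tau_bij[OF w], of F] .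
  also have "(\<Prod>a\<in>P. (if w a \<in> P then 1 else -1)) = sg w"
  proof -
    have "(\<Prod>a\<in>P. (if w a \<in> P then 1 else -1::complex)) = (\<Prod>a\<in>{a\<in>P. w a \<notin> P}. -1)"
      by (rule prod.mono_neutral_cong_right) (use finP in auto)
    then show ?thesis unfolding sg_def by simp
  qed
  finally show ?thesis .
qed

lemma prodg_nz: "(\<Prod>a\<in>P. bf a g) \<noteq> 0"
  using finP bfg P_R by (auto simp: prod_zero_iff)

lemma sg_mult: assumes u: "u \<in> W" and v: "v \<in> W" shows "sg (u \<circ> v) = sg u * sg v"
proof -
  have o1: "\<And>x. bf (- x) g = - bf x g" by simp
  have o2: "\<And>x. bf (u (- x)) g = - bf (u x) g" using lin_minus[OF W_lin[OF u]] by simp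
  have "sg (u \<circ> v) * (\<Prod>a\<in>P. bf a g) = (\<Prod>a\<in>P. bf ((u \<circ> v) a) g)"
    using prod_sign[OF W_comp[OF u v], of "\<lambda>x. bf x g"] by simp
  also have "\<dots> = sg v * (\<Prod>a\<in>P. bf (u a) g)"
    using prod_sign[OF v, of "\<lambda>x. bf (u x) g", OF o2] by simp
  also have "\<dots> = sg v * (sg u * (\<Prod>a\<in>P. bf a g))"
    using prod_sign[OF u, of "\<lambda>x. bf x g"] by simp
  finally show ?thesis using prodg_nz by (simp add: mult.commute)
qed

lemma sg_pm: "sg w = 1 \<or> sg w = -1"
  unfolding sg_def by (metis neg_one_even_power neg_one_odd_power)
lemma sg_sq: "sg w * sg w = 1" using sg_pm[of w] by auto
lemma sg_id: "sg id = 1" unfolding sg_def by simp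
lemma sg_id': "sg (\<lambda>x. x) = 1" unfolding sg_def by simp
lemma sg_refl_simple: assumes a: "a \<in> S" shows "sg (refl a) = -1"
proof -
  have "{b\<in>P. refl a b \<notin> P} = {a}"
    using simple_refl_pos[OF a] refl_self[OF bfaa[OF S_R[OF a]]] negP S_P[OF a] by auto
  then show ?thesis unfolding sg_def by simp
qed
lemma sg_inv: "u \<in> W \<Longrightarrow> v \<in> W \<Longrightarrow> (\<And>x. v (u x) = x) \<Longrightarrow> sg v = sg u"
proof -
  assume u: "u \<in> W" and v: "v \<in> W" and vu: "\<And>x. v (u x) = x"
  have "v \<circ> u = id" using vu by auto
  then have "sg (v \<circ> u) = 1" using sg_id by metis
  then have "sg v * sg u = 1" using sg_mult[OF v u] by simp
  then show ?thesis using sg_pm[of u] sg_pm[of v] by auto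
qed

lemma word_map_Nil[simp]: "word_map [] = id" unfolding word_map_def by simp
lemma word_map_Cons[simp]: "word_map (a # as) = refl a \<circ> word_map as" unfolding word_map_def by simp
lemma word_map_append: "word_map (xs @ ys) = word_map xs \<circ> word_map ys"
  by (induction xs) (auto simp: comp_assoc)
lemma word_map_W: "set as \<subseteq> R \<Longrightarrow> word_map as \<in> W"
  by (induction as) (auto intro: weyl.intros)
lemma sg_word: "set as \<subseteq> S \<Longrightarrow> sg (word_map as) = (-1) ^ length as"
proof (induction as)
  case Nil then show ?case by (simp add: sg_id sg_id')
next
  case (Cons a as)
  have e: "sg (word_map (a # as)) = sg (refl a) * sg (word_map as)"
    using sg_mult[OF refl_W word_map_W] Cons.prems S_R by auto
  have "sg (refl a) = -1" using Cons.prems sg_refl_simple by simp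
  then show ?case unfolding e using Cons by simp
qed

end



context rs begin

lemma refl_word:
  assumes bR: "b \<in> R"
  shows "(\<exists>as. set as \<subseteq> S \<and> refl b = word_map as) \<and> sg (refl b) = -1"
proof -
  have *: "(\<exists>as. set as \<subseteq> S \<and> refl b = word_map as) \<and> sg (refl b) = -1" if "b \<in> P" for b
    using that
  proof (induction "card {d\<in>P. h d < h b}" arbitrary: b rule: less_induct)
    case less
    show ?case
    proof (cases "b \<in> S")
      case True then show ?thesis using sg_refl_simple by (intro conjI exI[of _ "[b]"]) auto
    next
      case False
      have bR: "b \<in> R" using less.prems P_R by blast
      obtain xs where xs: "set xs \<subseteq> S" "b = sum_list xs" using pos_sum_simple less.prems by blast
      have "Re (bf b b) > 0" using Re_bf_aa_pos[OF bR] .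
      then have "\<not> Re (sum_list (map (\<lambda>x. bf x b) xs)) \<le> 0" using xs(2) bf_sum_list[of xs b] by simp
      then obtain a where a: "a \<in> set xs" "Re (bf a b) > 0" using Re_sum_list_nonpos[of xs "\<lambda>x. bf x b"] by force
      have aS: "a \<in> S" using a xs by blast
      have aR: "a \<in> R" using S_R[OF aS] .
      have ne: "b \<noteq> a" using False aS by blast
      define b' where "b' = refl a b"
      have b'P: "b' \<in> P" unfolding b'_def using simple_refl_pos[OF aS less.prems ne] .
      have rab: "bf b a = of_real (Re (bf a b))" using bf_R_real[OF aR realR[OF bR]] bf_sym[of a b] by simp
      have raa: "bf a a = of_real (Re (bf a a))" using bf_R_real[OF aR realR[OF aR]] .
      have rag: "bf a g = of_real (h a)" using bf_R_real[OF aR realg] unfolding h_def .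
      have c: "bf b (coroot a) = of_real (2 * Re (bf a b) / Re (bf a a))"
        unfolding bf_coroot using rab raa by (metis of_real_divide of_real_mult of_real_numeral)
      have "h b' = h b - Re (bf b (coroot a) * bf a g)"
        unfolding b'_def refl_def h_def by simp
      then have "h b' = h b - 2 * Re (bf a b) / Re (bf a a) * h a"
        unfolding c h_def by simp
      moreover have "2 * Re (bf a b) / Re (bf a a) * h a > 0"
        using a(2) Re_bf_aa_pos[OF aR] P_h[OF S_P[OF aS]] by simp
      ultimately have "h b' < h b" by simp
      then obtain as where as: "set as \<subseteq> S" "refl b' = word_map as" "sg (refl b') = -1"
        using less.hyps[OF card_lower_less[OF b'P]] b'P by blast
      have conj: "refl b' x = refl a (refl b (refl a x))" for x
        unfolding b'_def using refl_conj[OF refl_lin, of a "refl a"] refl_bf[OF bfaa[OF aR]] refl_refl[OF bfaa[OF aR]] by blast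
      have eq: "refl b = refl a \<circ> refl b' \<circ> refl a"
        by (rule ext) (simp add: conj refl_refl[OF bfaa[OF aR]])
      have "refl b = word_map ([a] @ as @ [a])"
        unfolding eq word_map_append as(2)[symmetric] by (simp add: comp_assoc)
      moreover have "sg (refl b) = -1"
      proof -
        have "sg (refl b) = sg (refl a) * sg (refl b' \<circ> refl a)"
          unfolding eq using sg_mult[OF refl_W[OF aR] W_comp[OF refl_W[OF P_R[OF b'P]] refl_W[OF aR]]]
          by (simp add: comp_assoc)
        also have "\<dots> = sg (refl a) * (sg (refl b') * sg (refl a))"
          using sg_mult[OF refl_W[OF P_R[OF b'P]] refl_W[OF aR]] by simp
        finally show ?thesis using as(3) sg_refl_simple[OF aS] by simp
      qed
      ultimately show ?thesis using as(1) aS by (intro conjI exI[of _ "[a] @ as @ [a]"]) auto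
    qed
  qed
  show ?thesis
  proof (cases "b \<in> P")
    case True then show ?thesis using * by blast
  next
    case False
    have e: "refl (- b) = refl b" by (rule refl_uminus)
    show ?thesis using *[OF R_cases[OF bR False]] unfolding e .
  qed
qed

lemma W_word: "w \<in> W \<Longrightarrow> \<exists>as. set as \<subseteq> S \<and> w = word_map as"
proof (induction rule: weyl.induct)
  case weyl_id then show ?case by (intro exI[of _ "[]"]) auto
next
  case (weyl_step w a)
  then obtain as where "set as \<subseteq> S" "w = word_map as" by blast
  moreover obtain bs where "set bs \<subseteq> S" "refl a = word_map bs" using refl_word[OF weyl_step.hyps(2)] by blast
  ultimately show ?case by (intro exI[of _ "bs @ as"]) (auto simp: word_map_append)
qed

lemma wlen_sg: assumes w: "w \<in> W" shows "(-1::complex) ^ wlen R g w = sg w"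
proof -
  let ?Q = "\<lambda>k. \<exists>as. length as = k \<and> set as \<subseteq> S \<and> w = word_map as"
  have "\<exists>k. ?Q k" using W_word[OF w] by blast
  then have "?Q (Least ?Q)" by (rule LeastI_ex)
  then obtain as where "length as = wlen R g w" "set as \<subseteq> S" "w = word_map as"
    unfolding wlen_def by blast
  then show ?thesis using sg_word by simp
qed

lemma refl_sg: "b \<in> R \<Longrightarrow> sg (refl b) = -1" using refl_word by blast

abbreviation "rh \<equiv> rho R g"
lemma rho_eq: "rh = csm (1/2) (\<Sum>a\<in>P. a)" unfolding rho_def ..
lemma realv_rho: "realv rh" unfolding rho_def using P_R realR by (intro realv_csm realv_sum) auto

lemma refl_perm: assumes a: "a \<in> S" shows "refl a ` (P - {a}) = P - {a}"
proof (rule endo_inj_surj)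
  show "finite (P - {a})" using finP by simp
  have aR: "a \<in> R" using S_R[OF a] .
  show "refl a ` (P - {a}) \<subseteq> P - {a}"
  proof
    fix y assume "y \<in> refl a ` (P - {a})"
    then obtain b where b: "b \<in> P" "b \<noteq> a" "y = refl a b" by auto
    have "y \<in> P" using simple_refl_pos[OF a b(1,2)] b(3) by simp
    moreover have "y \<noteq> a"
    proof
      assume "y = a"
      then have "b = - a" using b(3) refl_refl[OF bfaa[OF aR], of b] refl_self[OF bfaa[OF aR]] by metis
      then show False using b(1) negP S_P[OF a] by blast
    qed
    ultimately show "y \<in> P - {a}" by simp
  qed
  show "inj_on (refl a) (P - {a})"
    by (rule inj_onI) (metis refl_refl bfaa aR)
qed

lemma refl_rho: assumes a: "a \<in> S" shows "refl a rh = rh - a"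
proof -
  have aR: "a \<in> R" using S_R[OF a] .
  have aP: "a \<in> P" using S_P[OF a] .
  have inj: "inj_on (refl a) (P - {a})" by (rule inj_onI) (metis refl_refl bfaa aR)
  have "(\<Sum>b\<in>P - {a}. refl a b) = (\<Sum>b\<in>refl a ` (P - {a}). b)"
    using sum.reindex[OF inj, of "\<lambda>x. x"] by simp
  also have "\<dots> = (\<Sum>b\<in>P - {a}. b)" using refl_perm[OF a] by simp
  finally have e: "(\<Sum>b\<in>P - {a}. refl a b) = (\<Sum>b\<in>P - {a}. b)" .
  have "refl a (\<Sum>b\<in>P. b) = (\<Sum>b\<in>P. refl a b)" using lin_sum[OF refl_lin] .
  also have "\<dots> = refl a a + (\<Sum>b\<in>P - {a}. refl a b)" using sum.remove[OF finP aP] .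
  also have "\<dots> = - a + (\<Sum>b\<in>P - {a}. b)" using e refl_self[OF bfaa[OF aR]] by simp
  also have "\<dots> = (\<Sum>b\<in>P. b) - csm 2 a"
    using sum.remove[OF finP aP, of "\<lambda>x. x"] by (simp add: csm_two)
  finally show ?thesis unfolding rho_eq by (simp add: lin_csm[OF refl_lin])
qed

lemma rho_coroot: assumes a: "a \<in> S" shows "bf rh (coroot a) = 1"
proof -
  have "rh - csm (bf rh (coroot a)) a = rh - a" using refl_rho[OF a] unfolding refl_def .
  then have "csm (bf rh (coroot a)) a = a" by simp
  then show ?thesis using csm_eq_self zero_notin S_R[OF a] by metis
qed

lemma rho_simple: assumes a: "a \<in> S" shows "bf a rh = bf a a / 2"
proof -
  have "bf a a \<noteq> 0" using bfaa S_R a by blast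
  then show ?thesis using rho_coroot[OF a] unfolding bf_coroot by (simp add: bf_sym field_simps)
qed

lemma rho_simple_pos: assumes a: "a \<in> S" shows "Re (bf a rh) > 0"
proof -
  have "Re (bf a rh) = Re (bf a a) / 2" unfolding rho_simple[OF a] by simp
  then show ?thesis using Re_bf_aa_pos[OF S_R[OF a]] by simp
qed

lemma rho_pos: assumes b: "b \<in> P" shows "Re (bf b rh) > 0"
proof -
  obtain xs where xs: "set xs \<subseteq> S" "b = sum_list xs" using pos_sum_simple b by blast
  have "xs \<noteq> []" using xs zero_notin P_R b by auto
  then show ?thesis unfolding xs(2) bf_sum_list using xs(1)
    by (intro Re_sum_list_pos) (auto intro: rho_simple_pos)
qed

end



context rs begin

definition ex :: "real \<Rightarrow> complex^'n \<Rightarrow> complex^'n \<Rightarrow> complex" where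
  "ex L m v = exp (bf m v * of_real L)"
definition BB :: "real \<Rightarrow> complex^'n \<Rightarrow> complex^'n \<Rightarrow> complex" where
  "BB L m v = (\<Sum>u\<in>W. sg u * ex L m (u v))"

lemma id_W: "id \<in> W" by (rule weyl.weyl_id)

lemma bij_left: assumes w: "w \<in> W" shows "bij_betw (\<lambda>u. w \<circ> u) W W"
proof -
  obtain v where v: "v \<in> W" "\<forall>x. v (w x) = x" "\<forall>x. w (v x) = x" using W_inv[OF w] by blast
  show ?thesis
  proof (rule bij_betwI')
    fix x y assume "x \<in> W" "y \<in> W"
    show "(w \<circ> x = w \<circ> y) = (x = y)"
    proof
      assume "w \<circ> x = w \<circ> y"
      then have "v \<circ> (w \<circ> x) = v \<circ> (w \<circ> y)" by simp
      then show "x = y" using v by (simp add: comp_def)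
    qed simp
  next
    fix x assume "x \<in> W" then show "w \<circ> x \<in> W" using W_comp w by blast
  next
    fix y assume y: "y \<in> W"
    then have "v \<circ> y \<in> W" "y = w \<circ> (v \<circ> y)" using W_comp v by (auto simp: comp_def)
    then show "\<exists>x\<in>W. y = w \<circ> x" by blast
  qed
qed

lemma BB_W: assumes w: "w \<in> W" shows "BB L (w m) v = sg w * BB L m v"
proof -
  obtain i where i: "i \<in> W" "\<forall>x. i (w x) = x" "\<forall>x. w (i x) = x" using W_inv[OF w] by blast
  have e: "bf (w m) y = bf m (i y)" for y using W_orth[OF w, of m "i y"] i by simp
  have "BB L (w m) v = (\<Sum>u\<in>W. sg u * ex L m (i (u v)))" unfolding BB_def ex_def e ..
  also have "\<dots> = (\<Sum>u\<in>W. sg (w \<circ> u) * ex L m (i ((w \<circ> u) v)))"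
    using sum.reindex_bij_betw[OF bij_left[OF w], of "\<lambda>u. sg u * ex L m (i (u v))"] by simp
  also have "\<dots> = (\<Sum>u\<in>W. sg w * (sg u * ex L m (u v)))"
    by (rule sum.cong) (auto simp: sg_mult[OF w] i)
  finally show ?thesis unfolding BB_def by (simp add: sum_distrib_left)
qed

lemma BB_sing: assumes b: "b \<in> R" and o: "bf m b = 0" shows "BB L m v = 0"
proof -
  have "refl b m = m" using refl_orth[OF o] .
  then have "BB L m v = sg (refl b) * BB L m v" using BB_W[OF refl_W[OF b], of L m v] by simp
  then show ?thesis using refl_sg[OF b] by simp
qed

definition Fd :: "real \<Rightarrow> complex^'n \<Rightarrow> complex^'n \<Rightarrow> complex" where
  "Fd L v x = exp (bf x v * of_real L / 2) - exp (- (bf x v * of_real L / 2))"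
definition DD :: "real \<Rightarrow> complex^'n \<Rightarrow> complex" where
  "DD L v = (\<Prod>a\<in>P. Fd L v a)"

lemma DD_W: assumes u: "u \<in> W" shows "DD L (u v) = sg u * DD L v"
proof -
  obtain i where i: "i \<in> W" "\<forall>x. i (u x) = x" "\<forall>x. u (i x) = x" using W_inv[OF u] by blast
  have e: "Fd L (u v) a = Fd L v (i a)" for a
    unfolding Fd_def using W_orth[OF u, of "i a" v] i by simp
  have odd: "Fd L v (- x) = - Fd L v x" for x unfolding Fd_def by simp
  have "DD L (u v) = (\<Prod>a\<in>P. Fd L v (i a))" unfolding DD_def e ..
  also have "\<dots> = sg i * DD L v" unfolding DD_def by (rule prod_sign[of i "Fd L v", OF i(1) odd])
  finally show ?thesis using sg_inv[OF u i(1)] i by simp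
qed

lemma cardW: "card W > 0" using finW id_W by (auto simp: card_gt_0_iff)

lemma DD_avg: "DD L v = (1 / of_nat (card W)) * (\<Sum>u\<in>W. sg u * DD L (u v))"
proof -
  have "(\<Sum>u\<in>W. sg u * DD L (u v)) = (\<Sum>u\<in>W. DD L v)"
    by (rule sum.cong) (auto simp: DD_W mult.assoc[symmetric] sg_sq)
  then show ?thesis using cardW by simp
qed

definition es :: "(complex^'n) set \<Rightarrow> complex^'n \<Rightarrow> complex" where
  "es X a = (if a \<in> X then -1 else 1)"
definition hs :: "(complex^'n) set \<Rightarrow> complex^'n" where
  "hs X = (\<Sum>a\<in>P. csm (es X a / 2) a)"
definition cX :: "(complex^'n) set \<Rightarrow> complex" where
  "cX X = (\<Prod>a\<in>P. es X a)"

lemma DD_expand: "DD L v = (\<Sum>X\<in>Pow P. cX X * ex L (hs X) v)"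
proof -
  define x where "x a = bf a v * of_real L" for a
  have "DD L v = (\<Prod>a\<in>P. (- exp (- (x a / 2))) + exp (x a / 2))"
    unfolding DD_def Fd_def x_def by (rule prod.cong) auto
  also have "\<dots> = (\<Sum>X\<in>Pow P. (\<Prod>a\<in>X. - exp (- (x a / 2))) * (\<Prod>a\<in>P - X. exp (x a / 2)))"
    by (rule prod_add[OF finP])
  also have "\<dots> = (\<Sum>X\<in>Pow P. cX X * ex L (hs X) v)"
  proof (rule sum.cong[OF refl])
    fix X assume X: "X \<in> Pow P"
    have "(\<Prod>a\<in>X. - exp (- (x a / 2))) * (\<Prod>a\<in>P - X. exp (x a / 2))
        = (\<Prod>a\<in>P. es X a * exp (es X a * x a / 2))"
    proof -
      have "(\<Prod>a\<in>P. es X a * exp (es X a * x a / 2))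
          = (\<Prod>a\<in>P. if a \<in> X then - exp (- (x a / 2)) else exp (x a / 2))"
        by (rule prod.cong) (auto simp: es_def)
      also have "\<dots> = (\<Prod>a\<in>P \<inter> {a. a \<in> X}. - exp (- (x a / 2))) * (\<Prod>a\<in>P \<inter> - {a. a \<in> X}. exp (x a / 2))"
        by (rule prod.If_cases[OF finP])
      also have "P \<inter> {a. a \<in> X} = X" using X by auto
      also have "P \<inter> - {a. a \<in> X} = P - X" by auto
      finally show ?thesis by simp
    qed
    also have "\<dots> = cX X * exp (\<Sum>a\<in>P. es X a * x a / 2)"
      unfolding cX_def by (simp add: prod.distrib exp_sum[OF finP])
    also have "(\<Sum>a\<in>P. es X a * x a / 2) = bf (hs X) v * of_real L"
      unfolding hs_def x_def bf_sum_left by (simp add: sum_distrib_right mult.assoc)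
    finally show "(\<Prod>a\<in>X. - exp (- (x a / 2))) * (\<Prod>a\<in>P - X. exp (x a / 2)) = cX X * ex L (hs X) v"
      unfolding ex_def .
  qed
  finally show ?thesis .
qed

lemma DD_BB: "DD L v = (1 / of_nat (card W)) * (\<Sum>X\<in>Pow P. cX X * BB L (hs X) v)"
proof -
  have "(\<Sum>u\<in>W. sg u * DD L (u v)) = (\<Sum>u\<in>W. \<Sum>X\<in>Pow P. sg u * (cX X * ex L (hs X) (u v)))"
    unfolding DD_expand by (simp add: sum_distrib_left)
  also have "\<dots> = (\<Sum>X\<in>Pow P. \<Sum>u\<in>W. sg u * (cX X * ex L (hs X) (u v)))" by (rule sum.swap)
  also have "\<dots> = (\<Sum>X\<in>Pow P. cX X * BB L (hs X) v)"
    unfolding BB_def by (simp add: sum_distrib_left mult.left_commute)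
  finally show ?thesis using DD_avg[of L v] by simp
qed

end



context rs begin

lemma W_hs:
  assumes w: "w \<in> W" and e: "\<forall>a\<in>P. e a = 1 \<or> e a = -1"
  shows "\<exists>e'. (\<forall>b\<in>P. e' b = 1 \<or> e' b = -1) \<and>
    w (\<Sum>a\<in>P. csm (e a / 2) a) = (\<Sum>b\<in>P. csm (e' b / 2) b)"
proof -
  define s where "s a = (if w a \<in> P then 1 else -1 :: complex)" for a
  define ti where "ti = the_inv_into P (tau w)"
  define e' where "e' b = e (ti b) * s (ti b)" for b
  have ti: "ti (tau w a) = a" if "a \<in> P" for a
    unfolding ti_def using the_inv_into_f_f[OF tau_inj[OF w] that] .
  have tiP: "ti b \<in> P" if "b \<in> P" for b
  proof -
    have "b \<in> tau w ` P" using tau_bij[OF w] that unfolding bij_betw_def by simp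
    then show ?thesis unfolding ti_def using the_inv_into_into[OF tau_inj[OF w]] by blast
  qed
  have wa: "w a = csm (s a) (tau w a)" for a unfolding s_def tau_def by simp
  have "w (\<Sum>a\<in>P. csm (e a / 2) a) = (\<Sum>a\<in>P. csm (e a / 2) (w a))"
    using W_lin[OF w] by (simp add: lin_sum lin_csm)
  also have "\<dots> = (\<Sum>a\<in>P. csm (e' (tau w a) / 2) (tau w a))"
    by (rule sum.cong) (auto simp: wa e'_def ti mult.commute)
  also have "\<dots> = (\<Sum>b\<in>P. csm (e' b / 2) b)"
    using sum.reindex_bij_betw[OF tau_bij[OF w], of "\<lambda>b. csm (e' b / 2) b"] .
  finally have eq: "w (\<Sum>a\<in>P. csm (e a / 2) a) = (\<Sum>b\<in>P. csm (e' b / 2) b)" .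
  have "\<forall>b\<in>P. e' b = 1 \<or> e' b = -1"
  proof
    fix b assume "b \<in> P"
    then have "e (ti b) = 1 \<or> e (ti b) = -1" using e tiP by blast
    then show "e' b = 1 \<or> e' b = -1" unfolding e'_def s_def by auto
  qed
  then show ?thesis using eq by blast
qed

lemma Re_sum: "Re (\<Sum>a\<in>A. f a) = (\<Sum>a\<in>A. Re (f a))" by simp

lemma NA:
  assumes e: "\<forall>b\<in>P. e b = 1 \<or> e b = -1"
    and lam: "lam = (\<Sum>b\<in>P. csm (e b / 2) b)"
    and pos: "\<forall>a\<in>S. Re (bf a lam) > 0"
  shows "lam = rh"
proof -
  define d where "d b = (1 - e b) / 2" for b
  have d01: "d b = 0 \<or> d b = 1" if "b \<in> P" for b using e that unfolding d_def by auto
  have rh_sum: "rh = (\<Sum>b\<in>P. csm (1/2) b)" unfolding rho_eq csm_sum ..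
  have diff: "rh - lam = (\<Sum>b\<in>P. csm (d b) b)"
    unfolding rh_sum lam d_def sum_subtractf[symmetric]
    by (rule sum.cong) (auto simp: csm_diff_left[symmetric] diff_divide_distrib)
  have rl: "realv lam" unfolding lam using e P_R realR by (intro realv_sum realv_csm) auto
  have rr: "realv rh" by (rule realv_rho)
  define x where "x = lam - rh"
  have rx: "realv x" unfolding x_def using rl rr by blast
  have domx: "Re (bf a x) \<ge> 0" if a: "a \<in> S" for a
  proof -
    have aR: "a \<in> R" using S_R[OF a] .
    have "bf lam (coroot a) = bf rh (coroot a) - bf (rh - lam) (coroot a)" by simp
    also have "\<dots> = 1 - (\<Sum>b\<in>P. d b * bf b (coroot a))"
      unfolding rho_coroot[OF a] diff bf_sum_left by simp
    finally have "bf lam (coroot a) \<in> \<int>"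
      using d01 integral[OF aR] P_R
      by (metis (no_types, lifting) Ints_1 Ints_diff Ints_mult Ints_sum Ints_0)
    then obtain k :: int where k: "bf lam (coroot a) = of_int k" using int_Re by blast
    have r1: "bf lam a = of_real (Re (bf a lam))" using bf_R_real[OF aR rl] bf_sym[of lam a] by simp
    have r2: "bf a a = of_real (Re (bf a a))" using bf_R_real[OF aR realR[OF aR]] .
    have "bf lam (coroot a) = of_real (2 * Re (bf a lam) / Re (bf a a))"
      unfolding bf_coroot using r1 r2 by (metis of_real_divide of_real_mult of_real_numeral)
    then have kk: "real_of_int k = 2 * Re (bf a lam) / Re (bf a a)" using k
      by (metis of_real_eq_iff of_real_of_int_eq)
    have A: "Re (bf a a) > 0" using Re_bf_aa_pos[OF aR] .
    have "real_of_int k > 0" unfolding kk using pos a A by simp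
    then have "k > 0" by simp
    then have "real_of_int k \<ge> 1" by simp
    then have "2 * Re (bf a lam) \<ge> Re (bf a a)" unfolding kk using A by (simp add: field_simps)
    moreover have "Re (bf a rh) = Re (bf a a) / 2" unfolding rho_simple[OF a] by simp
    ultimately show ?thesis unfolding x_def by simp
  qed
  have domy: "Re (bf a (rh + lam)) \<ge> 0" if a: "a \<in> S" for a
    using rho_simple_pos[OF a] bspec[OF pos a] by simp
  have h1: "Re (bf rh x) \<ge> 0"
  proof -
    have "Re (bf rh x) = (\<Sum>b\<in>P. Re (bf b x) / 2)" unfolding rh_sum bf_sum_left by simp
    also have "\<dots> \<ge> 0" using dominance[OF domx] by (intro sum_nonneg) auto
    finally show ?thesis .
  qed
  have h2: "Re (bf (rh - lam) (rh + lam)) \<ge> 0"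
  proof -
    have "Re (bf (rh - lam) (rh + lam)) = (\<Sum>b\<in>P. Re (d b * bf b (rh + lam)))"
      unfolding diff bf_sum_left by (simp only: bf_csm_left Re_sum)
    also have "\<dots> \<ge> 0"
    proof (intro sum_nonneg)
      fix b assume b: "b \<in> P"
      show "Re (d b * bf b (rh + lam)) \<ge> 0"
        using d01[OF b] dominance[OF domy b] by auto
    qed
    finally show ?thesis .
  qed
  have lx: "lam = rh + x" unfolding x_def by simp
  have "bf (rh - lam) (rh + lam) = bf rh rh - bf lam lam"
    by (simp add: bf_sym[of lam rh])
  moreover have "bf lam lam = bf rh rh + 2 * bf rh x + bf x x"
    unfolding lx by (simp add: bf_sym[of x rh])
  ultimately have "Re (bf x x) \<le> 0" using h1 h2 by simp
  then have "x = 0" using bf_self_zero[OF rx] by simp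
  then show ?thesis unfolding x_def by simp
qed

lemma realv_hs: "realv (hs X)"
  unfolding hs_def es_def using P_R realR by (intro realv_sum realv_csm) auto

lemma hs_class: "\<exists>c. \<forall>L v. BB L (hs X) v = c * BB L rh v"
proof (cases "\<exists>b\<in>R. bf (hs X) b = 0")
  case True
  then show ?thesis using BB_sing by (intro exI[of _ 0]) auto
next
  case False
  define f where "f w = Re (bf (w (hs X)) rh)" for w
  have fin: "finite (f ` W)" using finW by simp
  have ne: "f ` W \<noteq> {}" using id_W by blast
  obtain w where w: "w \<in> W" "f w = Max (f ` W)" using Max_in[OF fin ne] by auto
  have wmax: "f u \<le> f w" if "u \<in> W" for u using Max_ge[OF fin] that w(2) by simp
  define lam where "lam = w (hs X)"
  have rl: "realv lam" unfolding lam_def using W_real[OF w(1) realv_hs] .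
  obtain i where i: "i \<in> W" "\<forall>x. i (w x) = x" "\<forall>x. w (i x) = x" using W_inv[OF w(1)] by blast
  have reg: "bf lam b \<noteq> 0" if b: "b \<in> R" for b
  proof -
    have "bf lam b = bf (w (hs X)) (w (i b))" unfolding lam_def using i by simp
    also have "\<dots> = bf (hs X) (i b)" using W_orth[OF w(1)] .
    finally show ?thesis using False W_R[OF i(1) b] by auto
  qed
  have pos: "Re (bf a lam) > 0" if a: "a \<in> S" for a
  proof -
    have aR: "a \<in> R" using S_R[OF a] .
    have r1: "bf a lam = of_real (Re (bf a lam))" using bf_R_real[OF aR rl] .
    have nz: "Re (bf a lam) \<noteq> 0" using reg[OF aR] r1 bf_sym[of a lam] by (metis of_real_0)
    have "\<not> Re (bf a lam) < 0"
    proof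
      assume neg: "Re (bf a lam) < 0"
      have r2: "bf a a = of_real (Re (bf a a))" using bf_R_real[OF aR realR[OF aR]] .
      have r3: "bf a rh = of_real (Re (bf a rh))" using bf_R_real[OF aR realv_rho] .
      have cor: "bf lam (coroot a) = of_real (2 * Re (bf a lam) / Re (bf a a))"
        unfolding bf_coroot using r1 r2 bf_sym[of lam a] by (metis of_real_divide of_real_mult of_real_numeral)
      have "f (refl a \<circ> w) = Re (bf (refl a lam) rh)" unfolding f_def lam_def by simp
      also have "\<dots> = f w - 2 * Re (bf a lam) / Re (bf a a) * Re (bf a rh)"
        unfolding refl_def f_def lam_def[symmetric] using cor r3 bf_sym[of a rh] by simp
      finally have "f (refl a \<circ> w) > f w"
        using neg Re_bf_aa_pos[OF aR] rho_simple_pos[OF a]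
        by (simp add: mult_neg_pos divide_neg_pos)
      moreover have "refl a \<circ> w \<in> W" using weyl_step[OF w(1) aR] .
      ultimately show False using wmax by fastforce
    qed
    then show ?thesis using nz by simp
  qed
  have esf: "\<forall>a\<in>P. es X a = 1 \<or> es X a = -1" unfolding es_def by auto
  obtain e' where e': "\<forall>b\<in>P. e' b = 1 \<or> e' b = -1"
    "w (\<Sum>a\<in>P. csm (es X a / 2) a) = (\<Sum>b\<in>P. csm (e' b / 2) b)"
    using W_hs[OF w(1) esf] by blast
  have lam2: "lam = (\<Sum>b\<in>P. csm (e' b / 2) b)" unfolding lam_def hs_def using e'(2) .
  have "lam = rh" using NA[OF e'(1) lam2] pos by blast
  have "hs X = i lam" unfolding lam_def using i by simp
  then have "hs X = i rh" using \<open>lam = rh\<close> by simp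
  then show ?thesis using BB_W[OF i(1)] by (intro exI[of _ "sg i"]) auto
qed

definition cc :: "(complex^'n) set \<Rightarrow> complex" where
  "cc X = (SOME c. \<forall>L v. BB L (hs X) v = c * BB L rh v)"
definition KK :: complex where
  "KK = (1 / of_nat (card W)) * (\<Sum>X\<in>Pow P. cX X * cc X)"

lemma cc: "BB L (hs X) v = cc X * BB L rh v"
  using someI_ex[OF hs_class[of X]] unfolding cc_def by blast

lemma DD_K: "DD L v = KK * BB L rh v"
  unfolding DD_BB KK_def cc by (simp add: sum_distrib_right mult.assoc)

lemma exp_diff_nz: "(t::real) \<noteq> 0 \<Longrightarrow> exp (complex_of_real t) - exp (- complex_of_real t) \<noteq> 0"
proof
  assume t: "t \<noteq> 0" and "exp (complex_of_real t) - exp (- complex_of_real t) = 0"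
  then have "complex_of_real (exp t) = complex_of_real (exp (- t))"
    by (simp add: exp_of_real[symmetric])
  then have "exp t = exp (- t)" by simp
  then show False using t by simp
qed

lemma DD_g_nz: assumes L: "L \<noteq> 0" shows "DD L g \<noteq> 0"
proof -
  have "Fd L g a \<noteq> 0" if a: "a \<in> P" for a
  proof -
    define t where "t = h a * L / 2"
    have t0: "t \<noteq> 0" unfolding t_def using P_h[OF a] L by simp
    have "bf a g = of_real (h a)" using bf_R_real[OF P_R[OF a] realg] unfolding h_def .
    then have "bf a g * of_real L / 2 = complex_of_real t" unfolding t_def by simp
    then have "Fd L g a = exp (complex_of_real t) - exp (- complex_of_real t)"
      unfolding Fd_def by simp
    then show ?thesis using exp_diff_nz[OF t0] by simp
  qed
  then show ?thesis unfolding DD_def prod_zero_iff[OF finP] by blast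
qed

lemma KK_nz: "KK \<noteq> 0" using DD_g_nz[of 1] DD_K[of 1 g] by auto

lemma BB_rho: "BB L rh v = DD L v / KK" using DD_K KK_nz by (simp add: field_simps)

end



context rs begin

lemma R_ne: "R \<noteq> {}"
proof -
  have "\<exists>a\<in>R. bf a a = 2" using srs' by (elim conjE) assumption
  then show ?thesis by blast
qed

lemma g_nz: "g \<noteq> 0" using R_ne bfg by fastforce

lemma Aalt_BB: "Aalt R g q y x = BB (ln q) x y"
  unfolding Aalt_def BB_def ex_def qpow_def
  by (rule sum.cong) (auto simp: wlen_sg)

lemma BB_scale: "BB L (csm 2 rh) (csm (1/2) v) = BB L rh v"
  unfolding BB_def ex_def by (rule sum.cong) (auto simp: lin_csm[OF W_lin])

lemma BB_scale2: "BB L (csm 2 rh) rh = BB L rh (csm 2 rh)"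
  unfolding BB_def ex_def by (rule sum.cong) (auto simp: lin_csm[OF W_lin])

definition gg :: "real \<Rightarrow> complex \<Rightarrow> complex" where
  "gg L z = exp (z * of_real L / 2) - exp (- (z * of_real L / 2))"
definition E2 :: "real \<Rightarrow> complex \<Rightarrow> complex" where
  "E2 L z = (if z = 0 then 2 * of_real L else gg L z / (z / 2))"

lemma Fd_gg: "Fd L v a = gg L (bf a v)" unfolding Fd_def gg_def ..

lemma gg_deriv: "(gg L has_field_derivative of_real L) (at 0)"
proof -
  have "(gg L has_field_derivative (exp (0 * of_real L / 2) * (of_real L / 2) - exp (- (0 * of_real L / 2)) * (- (of_real L / 2)))) (at 0)"
    unfolding gg_def by (auto intro!: derivative_eq_intros)
  then show ?thesis by simp
qed

lemma gg0: "gg L 0 = 0" unfolding gg_def by simp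

lemma isCont_E2: "isCont (E2 L) z"
proof (cases "z = 0")
  case True
  have "((\<lambda>y. (gg L y - gg L 0) / (y - 0)) \<longlongrightarrow> of_real L) (at 0)"
    using gg_deriv unfolding has_field_derivative_iff .
  then have "((\<lambda>y. 2 * ((gg L y - gg L 0) / (y - 0))) \<longlongrightarrow> 2 * of_real L) (at 0)"
    by (intro tendsto_mult tendsto_const)
  then have "(E2 L \<longlongrightarrow> 2 * of_real L) (at 0)"
    by (rule iffD1[OF LIM_equal, rotated]) (auto simp: E2_def gg0)
  then show ?thesis unfolding True isCont_def by (simp add: E2_def)
next
  case False
  have ev: "eventually (\<lambda>y. y \<noteq> 0) (nhds z)" using False by (rule t1_space_nhds)
  have "eventually (\<lambda>y. E2 L y = gg L y / (y / 2)) (nhds z)"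
    using ev by eventually_elim (simp add: E2_def)
  moreover have "isCont (\<lambda>y. gg L y / (y / 2)) z" unfolding gg_def using False
    by (intro continuous_intros) auto
  ultimately show ?thesis using isCont_cong[of "E2 L" "\<lambda>y. gg L y / (y / 2)" z] by simp
qed

lemma isCont_bf: "isCont (\<lambda>v. bf a v) x"
  unfolding bf_def by (intro continuous_intros isCont_vec_nth)

definition CC :: "real \<Rightarrow> complex" where
  "CC L = (\<Prod>a\<in>P. bf rh a) / DD L (csm 2 rh)"
definition Phi :: "real \<Rightarrow> complex^'n \<Rightarrow> complex" where
  "Phi L v = (\<Prod>a\<in>P. E2 L (bf a v)) * CC L"

lemma isCont_Phi: "isCont (Phi L) x"
  unfolding Phi_def
  by (intro continuous_intros continuous_prod isCont_o2[OF isCont_bf isCont_E2])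

lemma prod_rho_nz: "(\<Prod>a\<in>P. bf rh a) \<noteq> 0"
proof -
  have "bf rh a \<noteq> 0" if "a \<in> P" for a using rho_pos[OF that] bf_sym[of rh a] by force
  then show ?thesis by (simp add: prod_zero_iff[OF finP])
qed

lemma DD_2rho_nz: assumes L: "L \<noteq> 0" shows "DD L (csm 2 rh) \<noteq> 0"
proof -
  have "Fd L (csm 2 rh) a \<noteq> 0" if a: "a \<in> P" for a
  proof -
    define t where "t = Re (bf a rh) * L"
    have t0: "t \<noteq> 0" unfolding t_def using rho_pos[OF a] L by simp
    have "bf a rh = of_real (Re (bf a rh))" using bf_R_real[OF P_R[OF a] realv_rho] .
    then have "bf a (csm 2 rh) * of_real L / 2 = complex_of_real t" unfolding t_def by simp
    then have "Fd L (csm 2 rh) a = exp (complex_of_real t) - exp (- complex_of_real t)"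
      unfolding Fd_def by simp
    then show ?thesis using exp_diff_nz[OF t0] by simp
  qed
  then show ?thesis unfolding DD_def prod_zero_iff[OF finP] by blast
qed

lemma CC_nz: "L \<noteq> 0 \<Longrightarrow> CC L \<noteq> 0"
  unfolding CC_def using prod_rho_nz DD_2rho_nz by simp

lemma chi1_eq: "chi1 R g (csm (1/2) v - rh) = (\<Prod>a\<in>P. bf a v / 2) / (\<Prod>a\<in>P. bf rh a)"
  unfolding chi1_def by (simp add: bf_sym)

lemma phi_raw_eq:
  assumes q: "0 < q" and nz: "chi1 R g (csm (1/2) v - rh) \<noteq> 0"
  shows "phi_raw R g q v (csm 2 rh) = Phi (ln q) v"
proof -
  define L where "L = ln q"
  have z: "bf a v \<noteq> 0" if "a \<in> P" for a
    using nz that unfolding chi1_eq by (auto simp: prod_zero_iff[OF finP])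
  have chi: "chi R g q (csm (1/2) v - rh) (csm 2 rh) = DD L v / DD L (csm 2 rh)"
    unfolding chi_def Aalt_BB L_def by (simp add: BB_scale BB_scale2 BB_rho KK_nz)
  have "phi_raw R g q v (csm 2 rh) = (DD L v / DD L (csm 2 rh)) / ((\<Prod>a\<in>P. bf a v / 2) / (\<Prod>a\<in>P. bf rh a))"
    unfolding phi_raw_def chi chi1_eq ..
  also have "\<dots> = (DD L v / (\<Prod>a\<in>P. bf a v / 2)) * CC L"
    unfolding CC_def by (simp add: field_simps)
  also have "DD L v / (\<Prod>a\<in>P. bf a v / 2) = (\<Prod>a\<in>P. E2 L (bf a v))"
    unfolding DD_def prod_dividef[symmetric] E2_def Fd_gg using z by (intro prod.cong) auto
  finally show ?thesis unfolding Phi_def L_def .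
qed

end



context rs begin

lemma limpt: "v islimpt {x. chi1 R g (csm (1/2) x - rh) \<noteq> 0}"
proof (unfold islimpt_approachable, intro allI impI)
  fix e :: real assume e: "e > 0"
  define d where "d = e / (norm g + 1)"
  have d: "d > 0" unfolding d_def using e by (simp add: add_nonneg_pos)
  define Bad where "Bad = (\<lambda>a. Re (- bf a v) / h a) ` P"
  have "finite Bad" unfolding Bad_def using finP by simp
  then have "infinite ({0<..<d} - Bad)" using d by (intro Diff_infinite_finite) auto
  then obtain t where t: "t \<in> {0<..<d}" "t \<notin> Bad" using infinite_imp_nonempty by blast
  define x where "x = v + csm (of_real t) g"
  have nz: "bf a x \<noteq> 0" if a: "a \<in> P" for a
  proof
    assume z: "bf a x = 0"
    have "bf a g = of_real (h a)" using bf_R_real[OF P_R[OF a] realg] unfolding h_def .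
    then have "bf a v + of_real (t * h a) = 0" using z unfolding x_def by simp
    then have "Re (bf a v) + t * h a = 0" by (metis Re_complex_of_real plus_complex.sel(1) zero_complex.sel(1))
    then have "t = Re (- bf a v) / h a" using P_h[OF a] by (simp add: field_simps)
    then show False using t(2) a unfolding Bad_def by blast
  qed
  have "x \<in> {x. chi1 R g (csm (1/2) x - rh) \<noteq> 0}"
    unfolding chi1_eq using nz prod_rho_nz by (simp add: prod_zero_iff[OF finP])
  moreover have cs: "csm (of_real t) g = t *\<^sub>R g"
    unfolding vec_eq_iff by (simp add: scaleR_conv_of_real[where 'a=complex])
  have "t *\<^sub>R g \<noteq> 0" using t g_nz by simp
  then have "x \<noteq> v" unfolding x_def cs by simp
  moreover have "dist x v < e"
  proof -
    have "dist x v = t * norm g" unfolding x_def cs dist_norm using t by simp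
    also have "\<dots> \<le> t * (norm g + 1)" using t by simp
    also have "\<dots> < d * (norm g + 1)" using t by (intro mult_strict_right_mono) (auto simp: add_nonneg_pos)
    also have "\<dots> = e"
    proof -
      have np: "norm g + 1 \<noteq> 0" using norm_ge_zero[of g] by linarith
      then show ?thesis unfolding d_def by simp
    qed
    finally show ?thesis .
  qed
  ultimately show "\<exists>x'\<in>{x. chi1 R g (csm (1 / 2) x - rh) \<noteq> 0}. x' \<noteq> v \<and> dist x' v < e" by blast
qed

lemma exp_eq_1': "exp w = 1 \<longleftrightarrow> (\<exists>n::int. w = 2 * of_real pi * \<i> * of_int n)"
  unfolding exp_eq_1 by (auto simp: complex_eq_iff)

lemma E2_zero: assumes L: "L \<noteq> 0"
  shows "E2 L z = 0 \<longleftrightarrow> z \<noteq> 0 \<and> (\<exists>n::int. z * of_real L = 2 * of_real pi * \<i> * of_int n)"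
proof (cases "z = 0")
  case True then show ?thesis using L by (simp add: E2_def)
next
  case False
  define w where "w = z * of_real L / 2"
  have "gg L z = exp (- w) * (exp (2 * w) - 1)"
    unfolding gg_def w_def[symmetric] by (simp add: right_diff_distrib exp_add[symmetric])
  then have "gg L z = 0 \<longleftrightarrow> exp (2 * w) = 1" by simp
  moreover have "2 * w = z * of_real L" unfolding w_def by simp
  ultimately show ?thesis using False unfolding E2_def exp_eq_1' by simp
qed

theorem main:
  assumes q0: "0 < q" and q1: "q < 1"
  shows "phi1 R g q v (csm 2 rh) = 0 \<longleftrightarrow>
    (\<exists>a\<in>P. \<exists>k::int. k \<noteq> 0 \<and>
       bf v (coroot a) = 2 * pi * \<i> * of_int k / of_real (ln (q powr (Re (bf a a) / 2))))"
proof -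
  define L where "L = ln q"
  have L: "L \<noteq> 0" unfolding L_def using q0 q1 by simp
  define S0 where "S0 = {x. chi1 R g (csm (1/2) x - rh) \<noteq> 0}"
  have nt: "\<not> trivial_limit (at v within S0)"
    unfolding trivial_limit_within S0_def using limpt by blast
  have t1: "(Phi L \<longlongrightarrow> Phi L v) (at v within S0)"
    using tendsto_within_subset[OF isCont_Phi[where L=L and x=v, unfolded isCont_def] subset_UNIV] .
  have ev: "eventually (\<lambda>x. phi_raw R g q x (csm 2 rh) = Phi L x) (at v within S0)"
    unfolding eventually_at_filter S0_def L_def using phi_raw_eq[OF q0] by simp
  have "((\<lambda>x. phi_raw R g q x (csm 2 rh)) \<longlongrightarrow> Phi L v) (at v within S0)"
    using tendsto_cong[OF ev] t1 by simp
  then have ph: "phi1 R g q v (csm 2 rh) = Phi L v"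
    unfolding phi1_def S0_def[symmetric] by (rule tendsto_Lim[OF nt])
  have "Phi L v = 0 \<longleftrightarrow> (\<exists>a\<in>P. E2 L (bf a v) = 0)"
    unfolding Phi_def using CC_nz[OF L] by (simp add: prod_zero_iff[OF finP])
  also have "\<dots> \<longleftrightarrow> (\<exists>a\<in>P. \<exists>k::int. k \<noteq> 0 \<and>
       bf v (coroot a) = 2 * pi * \<i> * of_int k / of_real (ln (q powr (Re (bf a a) / 2))))"
  proof (intro bex_cong refl)
    fix a assume a: "a \<in> P"
    define A where "A = Re (bf a a)"
    have A: "A > 0" unfolding A_def using Re_bf_aa_pos[OF P_R[OF a]] .
    have aa: "bf a a = of_real A" unfolding A_def using bf_R_real[OF P_R[OF a] realR[OF P_R[OF a]]] .
    have lnq: "ln (q powr (A / 2)) = A / 2 * L" unfolding L_def by simp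
    have key: "(bf v (coroot a) = 2 * pi * \<i> * of_int k / of_real (A / 2 * L)) \<longleftrightarrow>
               bf a v * of_real L = 2 * of_real pi * \<i> * of_int k" for k :: int
      unfolding bf_coroot aa using A L by (auto simp: bf_sym field_simps)
    show "E2 L (bf a v) = 0 \<longleftrightarrow> (\<exists>k::int. k \<noteq> 0 \<and>
       bf v (coroot a) = 2 * pi * \<i> * of_int k / of_real (ln (q powr (Re (bf a a) / 2))))"
      unfolding E2_zero[OF L] A_def[symmetric] lnq key
      using L by (auto simp: mult_eq_0_iff)
  qed
  finally show ?thesis unfolding ph .
qed

end


theorem proposition4p4:
  fixes R :: "(complex^'n::finite) set" and \<gamma> :: "complex^'n" and q :: real
    and \<nu> :: "complex^'n"
  assumes "simple_root_system R" and "regular R \<gamma>"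
    and "0 < q" and "q < 1"
  shows "phi1 R \<gamma> q \<nu> (csm 2 (rho R \<gamma>)) = 0 \<longleftrightarrow>
    (\<exists>\<alpha>\<in>pos_roots R \<gamma>. \<exists>k::int. k \<noteq> 0 \<and>
       bf \<nu> (coroot \<alpha>) = 2 * pi * \<i> * of_int k / of_real (ln (q powr (Re (bf \<alpha> \<alpha>) / 2))))"
proof -
  interpret rs R \<gamma> by (rule rs.intro[OF assms(1,2)])
  show ?thesis by (rule main[OF assms(3,4)])
qed

end
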